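(* Let $I$ be a finite set of positive integers and $m=\max(I\cup\{0\})$. Then, as polynomials in $n$, $$d(I;n)=\sum_{k=0}^{m} a_k(I)\binom{n-m}{k},$$ where $a_0(I)=0$ and, for $1\le k\le m$, $a_k(I)$ is the number of permutations $\pi\in\mathfrak S_{2m}$ with $\mathrm{Des}\,\pi=I$ such that $\{\pi_1,\dots,\pi_m\}\cap[m+1,2m]=[m+1,m+k]$. Moreover $a_k(I)>0$ for all $1\le k\le m$.
   Context: For integers $a\le b$, $[a,b]=\{a,a+1,\dots,b\}$. For a permutation $\pi=\pi_1\cdots\pi_n$ of $[n]$, $\mathrm{Des}\,\pi=\{i\mid \pi_i>\pi_{i+1}\}$. For $n>m$, $d(I;n)=\#\{\pi\in\mathfrak S_n\mid \mathrm{Des}\,\pi=I\}$; this is a polynomial in $n$ of degree $m$, and the identity is an identity of polynomials (equivalently, it holds for all integers $n>m$). *)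

theory Defs
  imports "HOL-Combinatorics.Combinatorics"
begin

definition Des :: "nat \<Rightarrow> (nat \<Rightarrow> nat) \<Rightarrow> nat set" where
  "Des n \<pi> = {i. 1 \<le> i \<and> i < n \<and> \<pi> i > \<pi> (Suc i)}"

definition dcount :: "nat set \<Rightarrow> nat \<Rightarrow> nat" where
  "dcount I n = card {\<pi> . \<pi> permutes {1..n} \<and> Des n \<pi> = I}"

definition maxI :: "nat set \<Rightarrow> nat" where
  "maxI I = Max (insert 0 I)"

definition acoef :: "nat set \<Rightarrow> nat \<Rightarrow> nat" where
  "acoef I k = (let m = maxI I in
     card {\<pi> . \<pi> permutes {1..2*m} \<and> Des (2*m) \<pi> = I \<and>
             \<pi> ` {1..m} \<inter> {m+1..2*m} = {m+1..m+k}})"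

end

theory Submission
  imports Defs
begin

definition RR :: "nat set \<Rightarrow> nat \<Rightarrow> nat set \<Rightarrow> (nat \<Rightarrow> nat) set" where
  "RR I N B = {\<pi>. \<pi> permutes {1..N} \<and> Des N \<pi> = I \<and> \<pi> ` {1..maxI I} \<inter> {maxI I + 1..N} = B}"

lemma I_le: "finite I \<Longrightarrow> i \<in> I \<Longrightarrow> i \<le> maxI I"
  unfolding maxI_def by (simp add: Max_ge)

lemma maxI_in: "finite I \<Longrightarrow> I \<noteq> {} \<Longrightarrow> 0 \<notin> I \<Longrightarrow> maxI I \<in> I"
proof -
  assume a: "finite I" "I \<noteq> {}" "0 \<notin> I"
  have "Max (insert 0 I) \<in> insert 0 I" using a by (intro Max_in) auto
  moreover have "Max (insert 0 I) \<noteq> 0"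
  proof -
    obtain i where "i \<in> I" using a by auto
    hence "i \<le> Max (insert 0 I)" using a by simp
    thus ?thesis using \<open>i \<in> I\<close> a by (metis le_0_eq)
  qed
  ultimately show ?thesis unfolding maxI_def by auto
qed

lemma int_Suc: "A \<subseteq> {1..N::nat} \<Longrightarrow> A \<inter> {m+1..Suc N} = A \<inter> {m+1..N}"
  by (auto simp: le_Suc_eq)

lemma R_Suc:
  assumes fin: "finite I" and mN: "maxI I \<le> N" and B: "B \<subseteq> {maxI I + 1..N}"
  shows "RR I (Suc N) B = RR I N B"
proof
  show "RR I N B \<subseteq> RR I (Suc N) B"
  proof
    fix \<pi> assume "\<pi> \<in> RR I N B"
    hence p: "\<pi> permutes {1..N}" and d: "Des N \<pi> = I" and im: "\<pi> ` {1..maxI I} \<inter> {maxI I + 1..N} = B"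
      by (auto simp: RR_def)
    have p2: "\<pi> permutes {1..Suc N}" by (rule permutes_subset[OF p]) auto
    have s: "\<pi> (Suc N) = Suc N" using permutes_not_in[OF p] by auto
    have "\<pi> N \<le> N" if "N \<ge> 1" using permutes_in_image[OF p, of N] that by auto
    hence "Des (Suc N) \<pi> = Des N \<pi>" unfolding Des_def using s
      by (auto simp: less_Suc_eq)
    moreover have "\<pi> ` {1..maxI I} \<subseteq> {1..N}"
    proof (rule image_subsetI)
      fix x assume "x \<in> {1..maxI I}"
      hence "x \<in> {1..N}" using mN by auto
      thus "\<pi> x \<in> {1..N}" using permutes_in_image[OF p] by blast
    qed
    hence "\<pi> ` {1..maxI I} \<inter> {maxI I + 1..Suc N} = \<pi> ` {1..maxI I} \<inter> {maxI I + 1..N}"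
      by (rule int_Suc)
    ultimately show "\<pi> \<in> RR I (Suc N) B" using p2 d im by (auto simp: RR_def)
  qed
next
  show "RR I (Suc N) B \<subseteq> RR I N B"
  proof
    fix \<pi> assume "\<pi> \<in> RR I (Suc N) B"
    hence p: "\<pi> permutes {1..Suc N}" and d: "Des (Suc N) \<pi> = I" and im: "\<pi> ` {1..maxI I} \<inter> {maxI I + 1..Suc N} = B"
      by (auto simp: RR_def)
    have "Suc N \<in> \<pi> ` {1..Suc N}" using permutes_image[OF p] by simp
    then obtain j where j0: "j \<in> {1..Suc N}" "Suc N = \<pi> j" by (rule imageE)
    hence j: "j \<in> {1..Suc N}" "\<pi> j = Suc N" by auto
    have jN: "j = Suc N"
    proof (rule ccontr)
      assume "j \<noteq> Suc N"
      hence jl: "j \<le> N" using j by auto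
      show False
      proof (cases "j \<le> maxI I")
        case True
        hence "Suc N \<in> \<pi> ` {1..maxI I}" using j by (metis atLeastAtMost_iff image_eqI)
        hence "Suc N \<in> B" using im mN by auto
        thus False using B by auto
      next
        case False
        have "\<pi> (Suc j) \<in> {1..Suc N}" using permutes_in_image[OF p] jl by auto
        moreover have "\<pi> (Suc j) \<noteq> Suc N" using j permutes_inj[OF p] by (metis injD n_not_Suc_n)
        ultimately have "\<pi> (Suc j) < \<pi> j" using j by auto
        hence "j \<in> Des (Suc N) \<pi>" using j jl unfolding Des_def by auto
        hence "j \<le> maxI I" using d I_le[OF fin] by auto
        thus False using False by simp
      qed
    qed
    have p1: "\<pi> permutes {1..N}"
      unfolding permutes_def
    proof
      show "\<forall>x. x \<notin> {1..N} \<longrightarrow> \<pi> x = x"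
      proof (intro allI impI)
        fix x assume x: "x \<notin> {1..N}"
        show "\<pi> x = x"
        proof (cases "x = Suc N")
          case True thus ?thesis using j jN by simp
        next
          case False hence "x \<notin> {1..Suc N}" using x by auto
          thus ?thesis using permutes_not_in[OF p] by blast
        qed
      qed
      show "\<forall>y. \<exists>!x. \<pi> x = y" using p unfolding permutes_def by blast
    qed
    have "\<pi> N \<le> Suc N" if "N \<ge> 1" using permutes_in_image[OF p, of N] that by auto
    hence "Des (Suc N) \<pi> = Des N \<pi>" unfolding Des_def using j jN
      by (auto simp: less_Suc_eq)
    moreover have "\<pi> ` {1..maxI I} \<subseteq> {1..N}"
    proof (rule image_subsetI)
      fix x assume "x \<in> {1..maxI I}"
      hence "x \<in> {1..N}" using mN by auto
      thus "\<pi> x \<in> {1..N}" using permutes_in_image[OF p1] by blast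
    qed
    hence "\<pi> ` {1..maxI I} \<inter> {maxI I + 1..Suc N} = \<pi> ` {1..maxI I} \<inter> {maxI I + 1..N}"
      by (rule int_Suc)
    ultimately show "\<pi> \<in> RR I N B" using p1 d im by (auto simp: RR_def)
  qed
qed

lemma R_add:
  assumes fin: "finite I" and mN: "maxI I \<le> N" and B: "B \<subseteq> {maxI I + 1..N}"
  shows "RR I (N + d) B = RR I N B"
proof (induction d)
  case (Suc d)
  have "RR I (Suc (N + d)) B = RR I (N + d) B"
    by (rule R_Suc[OF fin]) (use mN B in auto)
  thus ?case using Suc by simp
qed simp

lemma tail_mono:
  assumes p: "\<pi> permutes {1..n}" and d: "Des n \<pi> = I" and le: "\<forall>i\<in>I. i \<le> m"
  shows "m + 1 + k \<le> n \<Longrightarrow> \<pi> (m + 1) \<le> \<pi> (m + 1 + k)"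
proof (induction k)
  case (Suc k)
  have a: "m + 1 + k \<notin> I" using le by auto
  have "\<not> (\<pi> (Suc (m + 1 + k)) < \<pi> (m + 1 + k))"
  proof
    assume "\<pi> (Suc (m + 1 + k)) < \<pi> (m + 1 + k)"
    hence "m + 1 + k \<in> Des n \<pi>" unfolding Des_def using Suc.prems by auto
    thus False using a d by simp
  qed
  thus ?case using Suc by simp
qed simp

lemma transpose_less:
  assumes "a = Suc b \<or> b = Suc a" "x \<noteq> y" "\<not> (x = a \<and> y = b)" "\<not> (x = b \<and> y = a)"
  shows "(transpose a b y < transpose a b x) \<longleftrightarrow> (y < (x::nat))"
  using assms by (auto simp: transpose_def)

lemma swap_into:
  assumes fin: "finite I" and pR: "\<pi> \<in> RR I n B" and aB: "a \<in> B" and bB: "b \<notin> B"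
    and b: "b \<in> {maxI I + 1..n}" and adj: "a = Suc b \<or> b = Suc a"
  shows "transpose a b \<circ> \<pi> \<in> RR I n (transpose a b ` B)"
proof -
  define m where "m = maxI I"
  have p: "\<pi> permutes {1..n}" and d: "Des n \<pi> = I" and im: "\<pi> ` {1..m} \<inter> {m + 1..n} = B"
    using pR by (auto simp: RR_def m_def)
  have le: "\<forall>i\<in>I. i \<le> m" using I_le[OF fin] m_def by auto
  have a: "a \<in> {m+1..n}" using aB im by auto
  have b': "b \<in> {m+1..n}" using b m_def by simp
  have inj: "inj \<pi>" by (rule permutes_inj[OF p])
  have sub: "\<pi> ` {1..m} \<subseteq> {1..n}"
  proof (rule image_subsetI)
    fix x assume "x \<in> {1..m}"
    hence "x \<in> {1..n}" using a by auto
    thus "\<pi> x \<in> {1..n}" using permutes_in_image[OF p] by blast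
  qed
  obtain t where t: "t \<in> {1..m}" "t \<notin> \<pi> ` {1..m}"
  proof -
    have "\<not> {1..m} \<subseteq> \<pi> ` {1..m}"
    proof
      assume s: "{1..m} \<subseteq> \<pi> ` {1..m}"
      have "card (\<pi> ` {1..m}) \<le> card {1..m}" by (rule card_image_le) simp
      hence "{1..m} = \<pi> ` {1..m}" using s by (intro card_seteq) auto
      hence "B = {}" using im by auto
      thus False using aB by simp
    qed
    thus ?thesis using that by blast
  qed
  have "t \<in> {1..n}" using t a by auto
  hence "t \<in> \<pi> ` {1..n}" using permutes_image[OF p] by simp
  then obtain j where j: "j \<in> {1..n}" "t = \<pi> j" by (rule imageE)
  have "j \<notin> {1..m}" using j t by auto
  hence jm: "m + 1 \<le> j" using j by auto
  have "\<pi> (m + 1) \<le> \<pi> (m + 1 + (j - (m + 1)))"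
    by (rule tail_mono[OF p d le]) (use jm j in auto)
  hence pm1: "\<pi> (m + 1) \<le> m" using jm j t by auto
  have "a \<in> \<pi> ` {1..m}" using aB im by blast
  then obtain q where q: "q \<in> {1..m}" "a = \<pi> q" by (rule imageE)
  have bn: "b \<notin> \<pi> ` {1..m}" using bB b' im by auto
  have "transpose a b \<circ> \<pi> permutes {1..n}"
    by (rule permutes_compose[OF p permutes_swap_id]) (use a b' in auto)
  moreover have "Des n (transpose a b \<circ> \<pi>) = Des n \<pi>"
  proof -
    have "(transpose a b (\<pi> (Suc i)) < transpose a b (\<pi> i)) \<longleftrightarrow> (\<pi> (Suc i) < \<pi> i)"
      if i: "1 \<le> i" "i < n" for i
    proof (rule transpose_less[OF adj])
      show "\<pi> i \<noteq> \<pi> (Suc i)" using inj by (metis injD n_not_Suc_n)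
      show "\<not> (\<pi> i = a \<and> \<pi> (Suc i) = b)"
      proof
        assume h: "\<pi> i = a \<and> \<pi> (Suc i) = b"
        hence "i = q" using q inj by (metis injD)
        moreover have "Suc i \<notin> {1..m}" using h bn by auto
        ultimately have "i = m" using q by auto
        thus False using h pm1 b' by auto
      qed
      show "\<not> (\<pi> i = b \<and> \<pi> (Suc i) = a)"
      proof
        assume h: "\<pi> i = b \<and> \<pi> (Suc i) = a"
        hence "Suc i = q" using q inj by (metis injD)
        hence "i \<in> {1..m}" using q i by auto
        thus False using h bn by auto
      qed
    qed
    thus ?thesis unfolding Des_def by auto
  qed
  moreover have "(transpose a b \<circ> \<pi>) ` {1..m} \<inter> {m + 1..n} = transpose a b ` B"
  proof -
    have "transpose a b ` {m+1..n} = {m+1..n}" using a b' by simp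
    hence "(transpose a b \<circ> \<pi>) ` {1..m} \<inter> {m + 1..n}
        = transpose a b ` (\<pi> ` {1..m}) \<inter> transpose a b ` {m + 1..n}"
      by (simp add: image_comp)
    also have "\<dots> = transpose a b ` (\<pi> ` {1..m} \<inter> {m + 1..n})"
      by (rule image_Int[symmetric]) simp
    finally show ?thesis using im by simp
  qed
  ultimately show ?thesis using d by (simp add: RR_def m_def)
qed

lemma swap_card:
  assumes fin: "finite I" and Bs: "B \<subseteq> {maxI I + 1..n}" and aB: "a \<in> B" and bB: "b \<notin> B"
    and b: "b \<in> {maxI I + 1..n}" and adj: "a = Suc b \<or> b = Suc a"
  shows "card (RR I n B) = card (RR I n (transpose a b ` B))"
proof (rule bij_betw_same_card[of "\<lambda>\<pi>. transpose a b \<circ> \<pi>"], rule bij_betwI[where g = "\<lambda>\<pi>. transpose a b \<circ> \<pi>"])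
  show "(\<circ>) (transpose a b) \<in> RR I n B \<rightarrow> RR I n (transpose a b ` B)"
    using swap_into[OF fin _ aB bB b adj] by blast
  have bB': "b \<in> transpose a b ` B" using aB by (metis transpose_apply_first image_eqI)
  have aB': "a \<notin> transpose a b ` B"
  proof
    assume "a \<in> transpose a b ` B"
    then obtain x where "x \<in> B" "a = transpose a b x" by auto
    hence "x = b" by (metis transpose_involutory transpose_apply_first)
    thus False using bB \<open>x \<in> B\<close> by simp
  qed
  have a: "a \<in> {maxI I + 1..n}" using aB Bs by auto
  have adj': "b = Suc a \<or> a = Suc b" using adj by auto
  have "transpose b a \<circ> \<pi> \<in> RR I n (transpose b a ` transpose a b ` B)"
    if "\<pi> \<in> RR I n (transpose a b ` B)" for \<pi>
    by (rule swap_into[OF fin that bB' aB' a adj'])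
  moreover have "transpose b a ` transpose a b ` B = B"
    by (simp add: image_comp transpose_commute)
  ultimately show "(\<circ>) (transpose a b) \<in> RR I n (transpose a b ` B) \<rightarrow> RR I n B"
    by (auto simp: transpose_commute)
  show "transpose a b \<circ> (transpose a b \<circ> x) = x" for x
    by (simp add: comp_assoc[symmetric])
  show "transpose a b \<circ> (transpose a b \<circ> y) = y" for y
    by (simp add: comp_assoc[symmetric])
qed

lemma exists_gap:
  assumes Bs: "B \<subseteq> {m+1..(n::nat)}" and ne: "B \<noteq> {m+1..m + card B}"
  shows "\<exists>v. m+1 \<le> v \<and> v \<notin> B \<and> Suc v \<in> B"
proof (rule ccontr)
  assume "\<not> ?thesis"
  hence H: "\<And>v. m+1 \<le> v \<Longrightarrow> v \<notin> B \<Longrightarrow> Suc v \<notin> B" by blast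
  have fB: "finite B" using Bs finite_subset by blast
  have down: "y + d \<notin> B" if "m+1 \<le> y" "y \<notin> B" for y d
  proof (induction d)
    case (Suc d)
    have "m+1 \<le> y + d" using that(1) by simp
    thus ?case using H Suc by simp
  qed (use that in simp)
  have "B \<subseteq> {m+1..m + card B}"
  proof
    fix x assume x: "x \<in> B"
    hence x1: "m+1 \<le> x" using Bs by auto
    have "{m+1..x} \<subseteq> B"
    proof
      fix y assume y: "y \<in> {m+1..x}"
      show "y \<in> B"
      proof (rule ccontr)
        assume "y \<notin> B"
        hence "y + (x - y) \<notin> B" using down[of y "x - y"] y by auto
        thus False using x y by auto
      qed
    qed
    hence "card {m+1..x} \<le> card B" using fB by (intro card_mono)
    thus "x \<in> {m+1..m + card B}" using x1 by auto
  qed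
  hence "B = {m+1..m + card B}" by (intro card_seteq) auto
  thus False using ne by simp
qed

lemma normalize:
  assumes fin: "finite I" and Bs: "B \<subseteq> {maxI I + 1..n}" and ne: "B \<noteq> {}"
  shows "card (RR I n B) = card (RR I n {maxI I + 1..maxI I + card B})"
  using Bs ne
proof (induction "\<Sum>B" arbitrary: B rule: less_induct)
  case less
  define m where "m = maxI I"
  have fB: "finite B" using less.prems finite_subset by blast
  show ?case
  proof (cases "B = {m+1..m + card B}")
    case True thus ?thesis using m_def by simp
  next
    case False
    then obtain v where v: "m+1 \<le> v" "v \<notin> B" "Suc v \<in> B"
      using exists_gap[of B m n] less.prems m_def by auto
    define B' where "B' = transpose (Suc v) v ` B"
    have vn: "v \<in> {maxI I + 1..n}" using v less.prems m_def by auto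
    have c1: "card (RR I n B) = card (RR I n B')"
      unfolding B'_def by (rule swap_card[OF fin less.prems(1) v(3) v(2) vn]) simp
    have B'eq: "B' = insert v (B - {Suc v})"
      unfolding B'_def using v by (auto simp: transpose_def image_iff)
    have cB': "card B' = card B" unfolding B'_def by (simp add: card_image)
    have "\<Sum>B' = v + (\<Sum>B - Suc v)" using B'eq fB v by (simp add: sum_diff1_nat)
    moreover have "Suc v \<le> \<Sum>B" using fB v(3) by (metis member_le_sum zero_le)
    ultimately have lt: "\<Sum>B' < \<Sum>B" by simp
    have "B' \<subseteq> {maxI I + 1..n}" using B'eq less.prems vn by auto
    moreover have "B' \<noteq> {}" using B'eq by simp
    ultimately have "card (RR I n B') = card (RR I n {maxI I + 1..maxI I + card B'})"
      using less.hyps[OF lt] by blast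
    thus ?thesis using c1 cB' by simp
  qed
qed

lemma acoef_RR: "acoef I k = card (RR I (2 * maxI I) {maxI I + 1..maxI I + k})"
  by (simp add: acoef_def RR_def Let_def)

lemma RR_acoef:
  assumes fin: "finite I" and Bs: "B \<subseteq> {maxI I + 1..n}" and k: "card B = k" "k \<le> maxI I"
    and mn: "maxI I < n"
  shows "card (RR I n B) = acoef I k"
proof -
  define m where "m = maxI I"
  have fB: "finite B" using Bs finite_subset by blast
  have c1: "card (RR I n B) = card (RR I n {m+1..m+k})"
  proof (cases "k = 0")
    case True hence "B = {}" using k fB by simp
    thus ?thesis using True by simp
  next
    case False hence "B \<noteq> {}" using k by auto
    thus ?thesis using normalize[OF fin Bs] k m_def by simp
  qed
  have "card B \<le> card {m+1..n}" using Bs fB m_def by (intro card_mono) auto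
  hence mkn: "m + k \<le> n" using k mn m_def by simp
  have s: "{m+1..m+k} \<subseteq> {maxI I + 1..m+k}" using m_def by simp
  have "RR I (m + k + (n - (m+k))) {m+1..m+k} = RR I (m+k) {m+1..m+k}"
    by (rule R_add[OF fin _ s]) (simp add: m_def)
  hence e1: "RR I n {m+1..m+k} = RR I (m+k) {m+1..m+k}" using mkn by simp
  have "RR I (m + k + (2*m - (m+k))) {m+1..m+k} = RR I (m+k) {m+1..m+k}"
    by (rule R_add[OF fin _ s]) (simp add: m_def)
  hence e2: "RR I (2*m) {m+1..m+k} = RR I (m+k) {m+1..m+k}" using k m_def by (simp add: mult_2)
  show ?thesis using c1 e1 e2 acoef_RR[of I k] m_def by simp
qed

lemma desc_exists:
  "D \<subseteq> {1..<m} \<Longrightarrow> \<exists>\<sigma>. inj_on \<sigma> {1..m} \<and> \<sigma> ` {1..m} \<subseteq> {1..m} \<and>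
     (\<forall>i. 1 \<le> i \<and> i < m \<longrightarrow> (\<sigma> (Suc i) < \<sigma> i \<longleftrightarrow> i \<in> D))"
proof (induction m arbitrary: D)
  case 0
  show ?case by (rule exI[of _ id]) auto
next
  case (Suc m)
  have "D - {m} \<subseteq> {1..<m}" using Suc.prems by auto
  hence "\<exists>\<sigma>. inj_on \<sigma> {1..m} \<and> \<sigma> ` {1..m} \<subseteq> {1..m} \<and>
     (\<forall>i. 1 \<le> i \<and> i < m \<longrightarrow> (\<sigma> (Suc i) < \<sigma> i \<longleftrightarrow> i \<in> D - {m}))" by (rule Suc.IH)
  then obtain \<sigma> where s: "inj_on \<sigma> {1..m}" "\<sigma> ` {1..m} \<subseteq> {1..m}"
     "\<forall>i. 1 \<le> i \<and> i < m \<longrightarrow> (\<sigma> (Suc i) < \<sigma> i \<longleftrightarrow> i \<in> D - {m})"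
    by (elim exE conjE)
  show ?case
  proof (cases "m \<in> D")
    case True
    define \<tau> where "\<tau> i = (if i = Suc m then 1 else \<sigma> i + 1)" for i
    have "inj_on \<tau> {1..Suc m}"
    proof (rule inj_onI)
      fix x y assume xy: "x \<in> {1..Suc m}" "y \<in> {1..Suc m}" "\<tau> x = \<tau> y"
      have pos: "\<sigma> z \<noteq> 0" if "1 \<le> z" "z \<le> m" for z using s(2) that by force
      show "x = y"
      proof (cases "x = Suc m"; cases "y = Suc m")
        assume "x \<noteq> Suc m" "y \<noteq> Suc m"
        hence "x \<in> {1..m}" "y \<in> {1..m}" using xy by auto
        moreover have "\<sigma> x = \<sigma> y" using xy(3) \<tau>_def \<open>x \<noteq> Suc m\<close> \<open>y \<noteq> Suc m\<close> by simp
        ultimately show "x = y" using s(1) by (meson inj_onD)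
      next
        assume "x = Suc m" "y \<noteq> Suc m"
        hence "1 \<le> y" "y \<le> m" using xy by (auto simp: le_Suc_eq)
        thus "x = y" using xy pos[of y] \<tau>_def \<open>x = Suc m\<close> \<open>y \<noteq> Suc m\<close> by simp
      next
        assume "x \<noteq> Suc m" "y = Suc m"
        hence "1 \<le> x" "x \<le> m" using xy by (auto simp: le_Suc_eq)
        thus "x = y" using xy pos[of x] \<tau>_def \<open>x \<noteq> Suc m\<close> \<open>y = Suc m\<close> by simp
      qed simp
    qed
    moreover have "\<tau> ` {1..Suc m} \<subseteq> {1..Suc m}"
    proof (rule image_subsetI)
      fix x assume "x \<in> {1..Suc m}"
      show "\<tau> x \<in> {1..Suc m}"
      proof (cases "x = Suc m")
        case False
        hence "x \<in> {1..m}" using \<open>x \<in> {1..Suc m}\<close> by (auto simp: le_Suc_eq)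
        hence "\<sigma> x \<in> {1..m}" using s(2) by blast
        thus ?thesis using False \<tau>_def by simp
      qed (simp add: \<tau>_def)
    qed
    moreover have "\<forall>i. 1 \<le> i \<and> i < Suc m \<longrightarrow> (\<tau> (Suc i) < \<tau> i \<longleftrightarrow> i \<in> D)"
    proof (intro allI impI)
      fix i assume i: "1 \<le> i \<and> i < Suc m"
      show "\<tau> (Suc i) < \<tau> i \<longleftrightarrow> i \<in> D"
      proof (cases "i = m")
        case True
        have "m \<in> {1..m}" using i True by auto
        hence "\<sigma> m \<in> {1..m}" using s(2) by blast
        thus ?thesis using True \<open>m \<in> D\<close> \<tau>_def by auto
      next
        case False
        hence "i < m" using i by simp
        hence "\<sigma> (Suc i) < \<sigma> i \<longleftrightarrow> i \<in> D - {m}" using s(3) i by blast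
        thus ?thesis using \<tau>_def \<open>i < m\<close> by simp
      qed
    qed
    ultimately show ?thesis by (intro exI[of _ \<tau>] conjI)
  next
    case False
    define \<tau> where "\<tau> i = (if i = Suc m then Suc m else \<sigma> i)" for i
    have "inj_on \<tau> {1..Suc m}"
    proof (rule inj_onI)
      fix x y assume xy: "x \<in> {1..Suc m}" "y \<in> {1..Suc m}" "\<tau> x = \<tau> y"
      have pos: "\<sigma> z \<noteq> Suc m" if "1 \<le> z" "z \<le> m" for z using s(2) that by force
      show "x = y"
      proof (cases "x = Suc m"; cases "y = Suc m")
        assume "x \<noteq> Suc m" "y \<noteq> Suc m"
        hence "x \<in> {1..m}" "y \<in> {1..m}" using xy by auto
        moreover have "\<sigma> x = \<sigma> y" using xy(3) \<tau>_def \<open>x \<noteq> Suc m\<close> \<open>y \<noteq> Suc m\<close> by simp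
        ultimately show "x = y" using s(1) by (meson inj_onD)
      next
        assume "x = Suc m" "y \<noteq> Suc m"
        hence "1 \<le> y" "y \<le> m" using xy by (auto simp: le_Suc_eq)
        thus "x = y" using xy pos[of y] \<tau>_def \<open>x = Suc m\<close> \<open>y \<noteq> Suc m\<close> by simp
      next
        assume "x \<noteq> Suc m" "y = Suc m"
        hence "1 \<le> x" "x \<le> m" using xy by (auto simp: le_Suc_eq)
        thus "x = y" using xy pos[of x] \<tau>_def \<open>x \<noteq> Suc m\<close> \<open>y = Suc m\<close> by simp
      qed simp
    qed
    moreover have "\<tau> ` {1..Suc m} \<subseteq> {1..Suc m}"
    proof (rule image_subsetI)
      fix x assume "x \<in> {1..Suc m}"
      show "\<tau> x \<in> {1..Suc m}"
      proof (cases "x = Suc m")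
        case False
        hence "x \<in> {1..m}" using \<open>x \<in> {1..Suc m}\<close> by (auto simp: le_Suc_eq)
        hence "\<sigma> x \<in> {1..m}" using s(2) by blast
        thus ?thesis using False \<tau>_def by simp
      qed (simp add: \<tau>_def)
    qed
    moreover have "\<forall>i. 1 \<le> i \<and> i < Suc m \<longrightarrow> (\<tau> (Suc i) < \<tau> i \<longleftrightarrow> i \<in> D)"
    proof (intro allI impI)
      fix i assume i: "1 \<le> i \<and> i < Suc m"
      show "\<tau> (Suc i) < \<tau> i \<longleftrightarrow> i \<in> D"
      proof (cases "i = m")
        case True
        have "m \<in> {1..m}" using i True by auto
        hence "\<sigma> m \<in> {1..m}" using s(2) by blast
        thus ?thesis using True \<open>m \<notin> D\<close> \<tau>_def by auto
      next
        case False
        hence "i < m" using i by simp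
        hence "\<sigma> (Suc i) < \<sigma> i \<longleftrightarrow> i \<in> D - {m}" using s(3) i by blast
        thus ?thesis using \<tau>_def \<open>i < m\<close> by simp
      qed
    qed
    ultimately show ?thesis by (intro exI[of _ \<tau>] conjI)
  qed
qed


lemma I_sub:
  assumes "finite I" "0 \<notin> I"
  shows "I \<subseteq> {1..maxI I}"
proof
  fix i assume i: "i \<in> I"
  hence "i \<le> maxI I" using I_le[OF assms(1)] by blast
  moreover have "i \<noteq> 0" using i assms(2) by (metis)
  ultimately show "i \<in> {1..maxI I}" by simp
qed

lemma acoef_pos:
  assumes fin: "finite I" and z: "0 \<notin> I" and k: "k \<in> {1..maxI I}"
  shows "acoef I k > 0"
proof -
  define m where "m = maxI I"
  have k1: "1 \<le> k" "k \<le> m" using k m_def by auto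
  have "I \<noteq> {}" using k1 unfolding m_def maxI_def by auto
  hence mI: "m \<in> I" using maxI_in fin z m_def by auto
  have Isub: "I \<subseteq> {1..m}" using I_sub[OF fin z] m_def by simp
  have "I - {m} \<subseteq> {1..<m}" using Isub by auto
  hence "\<exists>\<sigma>. inj_on \<sigma> {1..m} \<and> \<sigma> ` {1..m} \<subseteq> {1..m} \<and>
     (\<forall>i. 1 \<le> i \<and> i < m \<longrightarrow> (\<sigma> (Suc i) < \<sigma> i \<longleftrightarrow> i \<in> I - {m}))" by (rule desc_exists)
  then obtain \<sigma> where s: "inj_on \<sigma> {1..m}" "\<sigma> ` {1..m} \<subseteq> {1..m}"
     "\<forall>i. 1 \<le> i \<and> i < m \<longrightarrow> (\<sigma> (Suc i) < \<sigma> i \<longleftrightarrow> i \<in> I - {m})"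
    by (elim exE conjE)
  have simg: "\<sigma> ` {1..m} = {1..m}" using endo_inj_surj[OF _ s(2) s(1)] by simp
  have sb: "1 \<le> \<sigma> x \<and> \<sigma> x \<le> m" if "1 \<le> x" "x \<le> m" for x
  proof -
    have "x \<in> {1..m}" using that by simp
    hence "\<sigma> x \<in> {1..m}" using s(2) by blast
    thus ?thesis by simp
  qed
  define \<pi> where "\<pi> i = (if 1 \<le> i \<and> i \<le> m then \<sigma> i + k else if m < i \<and> i \<le> m + k then i - m else i)" for i
  define S where "S = {1..2*m}"
  have r1: "\<pi> x = \<sigma> x + k" if "1 \<le> x" "x \<le> m" for x using that \<pi>_def by simp
  have r2: "\<pi> x = x - m" if "m < x" "x \<le> m + k" for x using that \<pi>_def by simp
  have r3: "\<pi> x = x" if "m + k < x \<or> x = 0" for x using that \<pi>_def by auto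
  have v1: "k + 1 \<le> \<pi> x \<and> \<pi> x \<le> m + k" if "1 \<le> x" "x \<le> m" for x
    using r1[OF that] sb[OF that] by simp
  have v2: "1 \<le> \<pi> x \<and> \<pi> x \<le> k \<and> \<pi> x + m = x" if "m < x" "x \<le> m + k" for x
    using r2[OF that] that by linarith
  have v3: "\<pi> x = x" if "m + k < x" for x using r3[of x] that by simp
  have inj: "inj_on \<pi> S"
  proof (rule inj_onI)
    fix x y assume xy: "x \<in> S" "y \<in> S" "\<pi> x = \<pi> y"
    have xS: "1 \<le> x" "x \<le> 2*m" "1 \<le> y" "y \<le> 2*m" using xy S_def by auto
    show "x = y"
    proof (cases "x \<le> m")
      case x1: True
      note vx = v1[OF xS(1) x1]
      show ?thesis
      proof (cases "y \<le> m")
        case True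
        hence "\<sigma> x = \<sigma> y" using xy(3) r1[OF xS(1) x1] r1[OF xS(3) True] by simp
        thus ?thesis using s(1) True x1 xS by (meson atLeastAtMost_iff inj_onD)
      next
        case False
        show ?thesis
        proof (cases "y \<le> m + k")
          case True
          note vy = v2[of y] thus ?thesis using vx xy(3) False True by linarith
        next
          case f2: False
          note vy = v3[of y] thus ?thesis using vx xy(3) f2 by linarith
        qed
      qed
    next
      case x1: False
      show ?thesis
      proof (cases "x \<le> m + k")
        case x2: True
        note vx = v2[of x]
        show ?thesis
        proof (cases "y \<le> m")
          case True
          note vy = v1[OF xS(3) True] thus ?thesis using vx xy(3) x1 x2 by linarith
        next
          case False
          show ?thesis
          proof (cases "y \<le> m + k")
            case True
            note vy = v2[of y] thus ?thesis using vx xy(3) False True x1 x2 by linarith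
          next
            case f2: False
            note vy = v3[of y] thus ?thesis using vx xy(3) f2 x1 x2 by linarith
          qed
        qed
      next
        case x2: False
        note vx = v3[of x]
        show ?thesis
        proof (cases "y \<le> m")
          case True
          note vy = v1[OF xS(3) True] thus ?thesis using vx xy(3) x2 by linarith
        next
          case False
          show ?thesis
          proof (cases "y \<le> m + k")
            case True
            note vy = v2[of y] thus ?thesis using vx xy(3) False True x2 by linarith
          next
            case f2: False
            note vy = v3[of y] thus ?thesis using vx xy(3) f2 x2 by linarith
          qed
        qed
      qed
    qed
  qed
  have imS: "\<pi> ` S \<subseteq> S"
  proof (rule image_subsetI)
    fix x assume x: "x \<in> S"
    consider "1 \<le> x \<and> x \<le> m" | "m < x \<and> x \<le> m + k" | "m + k < x" using x S_def by force
    thus "\<pi> x \<in> S"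
    proof cases
      case 1 thus ?thesis using r1[of x] sb[of x] k1 S_def by simp
    next
      case 2
      hence "1 \<le> \<pi> x \<and> \<pi> x \<le> k" using v2[of x] by blast
      thus ?thesis using k1 S_def by auto
    next
      case 3 thus ?thesis using r3[of x] x by simp
    qed
  qed
  have fS: "finite S" by (simp add: S_def)
  have "\<pi> ` S = S" by (rule endo_inj_surj[OF fS imS inj])
  hence bij: "bij_betw \<pi> S S" using inj by (simp add: bij_betw_def)
  have perm: "\<pi> permutes {1..2*m}"
  proof (rule bij_imp_permutes)
    show "bij_betw \<pi> {1..2*m} {1..2*m}" using bij S_def by simp
    fix x assume "x \<notin> {1..2*m}"
    hence "m + k < x \<or> x = 0" using k1 by auto
    thus "\<pi> x = x" by (rule r3)
  qed
  have des: "Des (2*m) \<pi> = I"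
  proof -
    have "(\<pi> (Suc i) < \<pi> i) \<longleftrightarrow> i \<in> I" if i: "1 \<le> i" "i < 2*m" for i
    proof -
      consider "i < m" | "i = m" | "m < i" by linarith
      thus ?thesis
      proof cases
        case 1
        have "\<sigma> (Suc i) < \<sigma> i \<longleftrightarrow> i \<in> I - {m}" using s(3) i 1 by blast
        thus ?thesis using r1[of i] r1[of "Suc i"] i 1 by simp
      next
        case 2
        have "\<pi> (Suc i) = 1" using r2[of "Suc i"] 2 k1 by simp
        moreover have "\<pi> i \<ge> 2" using r1[of i] sb[of i] 2 i k1 by simp
        ultimately show ?thesis using 2 mI by simp
      next
        case 3
        have "i \<notin> I" using 3 Isub by auto
        moreover have "\<pi> i < \<pi> (Suc i)"
        proof -
          consider "Suc i \<le> m + k" | "i = m + k" | "m + k < i" using 3 by linarith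
          thus ?thesis
          proof cases
            case 1 thus ?thesis using r2[of i] r2[of "Suc i"] 3 by simp
          next
            case 2 thus ?thesis using r2[of i] r3[of "Suc i"] 3 k1 by simp
          next
            case 3 thus ?thesis using r3[of i] r3[of "Suc i"] by simp
          qed
        qed
        ultimately show ?thesis by simp
      qed
    qed
    moreover have "i \<in> I \<Longrightarrow> 1 \<le> i \<and> i < 2*m" for i using Isub k1 by force
    ultimately have "\<forall>i. (1 \<le> i \<and> i < 2*m \<and> \<pi> (Suc i) < \<pi> i) \<longleftrightarrow> i \<in> I" by blast
    thus ?thesis unfolding Des_def by simp
  qed
  have "\<pi> ` {1..m} = (\<lambda>x. x + k) ` (\<sigma> ` {1..m})"
    unfolding image_comp by (rule image_cong) (auto simp: r1)
  hence "\<pi> ` {1..m} = {1 + k..m + k}" using simg by simp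
  hence im: "\<pi> ` {1..m} \<inter> {m + 1..2*m} = {m+1..m+k}" using k1 by auto
  have "\<pi> \<in> RR I (2 * maxI I) {maxI I + 1..maxI I + k}"
    using perm des im unfolding RR_def m_def by simp
  moreover have "finite (RR I (2 * maxI I) {maxI I + 1..maxI I + k})"
    by (rule finite_subset[OF _ finite_permutations[of "{1..2*maxI I}"]]) (auto simp: RR_def)
  ultimately show ?thesis unfolding acoef_RR using card_gt_0_iff by blast
qed

lemma acoef_zero:
  assumes fin: "finite I" and z: "0 \<notin> I" and ne: "I \<noteq> {}"
  shows "acoef I 0 = 0"
proof -
  define m where "m = maxI I"
  have mI: "m \<in> I" using maxI_in fin z ne m_def by auto
  have m1: "1 \<le> m" using mI z by (cases m) auto
  have "RR I (2 * m) {m + 1..m + 0} = {}"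
  proof (rule ccontr)
    assume "RR I (2 * m) {m + 1..m + 0} \<noteq> {}"
    then obtain \<pi> where "\<pi> \<in> RR I (2 * m) {m + 1..m + 0}" by blast
    hence p: "\<pi> permutes {1..2*m}" and d: "Des (2*m) \<pi> = I"
      and im: "\<pi> ` {1..m} \<inter> {m + 1..2*m} = {}" by (auto simp: RR_def m_def)
    have sub: "\<pi> ` {1..m} \<subseteq> {1..2*m}"
    proof (rule image_subsetI)
      fix x assume "x \<in> {1..m}"
      hence "x \<in> {1..2*m}" by auto
      thus "\<pi> x \<in> {1..2*m}" using permutes_in_image[OF p] by blast
    qed
    have sub2: "\<pi> ` {1..m} \<subseteq> {1..m}"
    proof
      fix y assume y: "y \<in> \<pi> ` {1..m}"
      hence "y \<in> {1..2*m}" using sub by blast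
      moreover have "y \<notin> {m+1..2*m}" using im y by blast
      ultimately show "y \<in> {1..m}" by auto
    qed
    have "card (\<pi> ` {1..m}) = m"
      using card_image[OF inj_on_subset[OF permutes_inj[OF p]]] by simp
    hence eq: "\<pi> ` {1..m} = {1..m}" using sub2 by (intro card_seteq) auto
    have "m + 1 \<in> {1..2*m}" using m1 by auto
    hence a: "\<pi> (m + 1) \<in> {1..2*m}" using permutes_in_image[OF p] by blast
    have "\<pi> (m+1) \<notin> \<pi> ` {1..m}"
    proof
      assume "\<pi> (m+1) \<in> \<pi> ` {1..m}"
      then obtain x where x: "x \<in> {1..m}" "\<pi> (m+1) = \<pi> x" by (rule imageE)
      hence "m + 1 = x" using permutes_inj[OF p] by (meson injD)
      thus False using x by simp
    qed
    hence "m < \<pi> (m + 1)" using a eq by auto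
    moreover have "\<pi> m \<le> m" using eq m1 by auto
    ultimately have "m \<notin> Des (2*m) \<pi>" unfolding Des_def by auto
    thus False using d mI by simp
  qed
  thus ?thesis unfolding acoef_RR m_def by simp
qed

theorem theorem3p3:
  fixes I :: "nat set"
  assumes "finite I" and "0 \<notin> I"
  shows "(\<forall>n > maxI I. dcount I n = (\<Sum>k=0..maxI I. acoef I k * ((n - maxI I) choose k)))
         \<and> (I \<noteq> {} \<longrightarrow> acoef I 0 = 0)
         \<and> (\<forall>k \<in> {1..maxI I}. acoef I k > 0)"
proof (intro conjI)
  show "I \<noteq> {} \<longrightarrow> acoef I 0 = 0" using acoef_zero[OF assms] by blast
  show "\<forall>k \<in> {1..maxI I}. acoef I k > 0" using acoef_pos[OF assms] by blast
  show "\<forall>n > maxI I. dcount I n = (\<Sum>k=0..maxI I. acoef I k * ((n - maxI I) choose k))"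
  proof (intro allI impI)
    fix n assume n: "maxI I < n"
    define m where "m = maxI I"
    define P where "P = {\<pi>. \<pi> permutes {1..n} \<and> Des n \<pi> = I}"
    define Bs where "Bs k = {B. B \<subseteq> {m+1..n} \<and> card B = k}" for k
    have mem: "\<pi> \<in> RR I n B \<longleftrightarrow> \<pi> \<in> P \<and> B = \<pi> ` {1..m} \<inter> {m+1..n}" for \<pi> B
      unfolding RR_def P_def m_def by auto
    have finR: "finite (RR I n B)" for B
      by (rule finite_subset[OF _ finite_permutations[of "{1..n}"]]) (auto simp: RR_def)
    have finBs: "finite (Bs k)" for k
      by (rule finite_subset[of _ "Pow {m+1..n}"]) (auto simp: Bs_def)
    have Pu: "P = (\<Union>k\<in>{0..m}. \<Union>B\<in>Bs k. RR I n B)"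
    proof (rule set_eqI)
      fix \<pi>
      show "\<pi> \<in> P \<longleftrightarrow> \<pi> \<in> (\<Union>k\<in>{0..m}. \<Union>B\<in>Bs k. RR I n B)"
      proof
        assume pP: "\<pi> \<in> P"
        define B where "B = \<pi> ` {1..m} \<inter> {m+1..n}"
        have "card B \<le> card (\<pi> ` {1..m})" unfolding B_def by (intro card_mono) auto
        also have "\<dots> \<le> card {1..m}" by (rule card_image_le) simp
        finally have "card B \<in> {0..m}" by simp
        moreover have "B \<in> Bs (card B)" unfolding Bs_def B_def by auto
        moreover have "\<pi> \<in> RR I n B" using mem[of \<pi> B] pP B_def by blast
        ultimately show "\<pi> \<in> (\<Union>k\<in>{0..m}. \<Union>B\<in>Bs k. RR I n B)" by blast
      next
        assume "\<pi> \<in> (\<Union>k\<in>{0..m}. \<Union>B\<in>Bs k. RR I n B)"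
        then obtain B where "\<pi> \<in> RR I n B" by blast
        thus "\<pi> \<in> P" using mem[of \<pi> B] by blast
      qed
    qed
    have "dcount I n = card P" unfolding dcount_def P_def by simp
    also have "\<dots> = (\<Sum>k\<in>{0..m}. card (\<Union>B\<in>Bs k. RR I n B))"
      unfolding Pu
    proof (rule card_UN_disjoint)
      show "finite {0..m}" by simp
      show "\<forall>k\<in>{0..m}. finite (\<Union>B\<in>Bs k. RR I n B)" using finR finBs by blast
      show "\<forall>k\<in>{0..m}. \<forall>j\<in>{0..m}. k \<noteq> j \<longrightarrow> (\<Union>B\<in>Bs k. RR I n B) \<inter> (\<Union>B\<in>Bs j. RR I n B) = {}"
      proof (intro ballI impI)
        fix k j :: nat assume "k \<noteq> j"
        show "(\<Union>B\<in>Bs k. RR I n B) \<inter> (\<Union>B\<in>Bs j. RR I n B) = {}"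
        proof (rule ccontr)
          assume "(\<Union>B\<in>Bs k. RR I n B) \<inter> (\<Union>B\<in>Bs j. RR I n B) \<noteq> {}"
          then obtain \<pi> B B' where "B \<in> Bs k" "B' \<in> Bs j" "\<pi> \<in> RR I n B" "\<pi> \<in> RR I n B'" by blast
          hence "B = \<pi> ` {1..m} \<inter> {m+1..n}" "B' = \<pi> ` {1..m} \<inter> {m+1..n}" "card B = k" "card B' = j"
            using mem[of \<pi> B] mem[of \<pi> B'] unfolding Bs_def by blast+
          thus False using \<open>k \<noteq> j\<close> by simp
        qed
      qed
    qed
    also have "\<dots> = (\<Sum>k\<in>{0..m}. acoef I k * ((n - m) choose k))"
    proof (rule sum.cong[OF refl])
      fix k assume k: "k \<in> {0..m}"
      have "card (\<Union>B\<in>Bs k. RR I n B) = (\<Sum>B\<in>Bs k. card (RR I n B))"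
      proof (rule card_UN_disjoint)
        show "finite (Bs k)" by (rule finBs)
        show "\<forall>B\<in>Bs k. finite (RR I n B)" using finR by blast
        show "\<forall>B\<in>Bs k. \<forall>B'\<in>Bs k. B \<noteq> B' \<longrightarrow> RR I n B \<inter> RR I n B' = {}"
        proof (intro ballI impI)
          fix B B' :: "nat set" assume "B \<noteq> B'"
          show "RR I n B \<inter> RR I n B' = {}"
          proof (rule ccontr)
            assume "RR I n B \<inter> RR I n B' \<noteq> {}"
            then obtain \<pi> where "\<pi> \<in> RR I n B" "\<pi> \<in> RR I n B'" by blast
            hence "B = \<pi> ` {1..m} \<inter> {m+1..n}" "B' = \<pi> ` {1..m} \<inter> {m+1..n}"
              using mem[of \<pi> B] mem[of \<pi> B'] by blast+
            thus False using \<open>B \<noteq> B'\<close> by simp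
          qed
        qed
      qed
      also have "\<dots> = (\<Sum>B\<in>Bs k. acoef I k)"
      proof (rule sum.cong[OF refl])
        fix B assume "B \<in> Bs k"
        hence "B \<subseteq> {maxI I + 1..n}" "card B = k" unfolding Bs_def m_def by auto
        thus "card (RR I n B) = acoef I k"
          using RR_acoef[OF assms(1)] k n m_def by simp
      qed
      also have "\<dots> = card (Bs k) * acoef I k" by simp
      also have "card (Bs k) = (n - m) choose k"
        unfolding Bs_def using n_subsets[of "{m+1..n}" k] by simp
      finally show "card (\<Union>B\<in>Bs k. RR I n B) = acoef I k * ((n - m) choose k)" by simp
    qed
    finally show "dcount I n = (\<Sum>k=0..maxI I. acoef I k * ((n - maxI I) choose k))"
      using m_def by simp
  qed
qed

end
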